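(* For every $\varepsilon>0$ there is a constant $C_\varepsilon$ such that for every $n\geq 2$ and every pair of disjoint sets $\mathcal{A},\mathcal{B}\subseteq\{0,1\}^n$, there is a first-order sentence over $\tau_{\mathsf{string}}$ with at most $(1+\varepsilon)\frac{n}{\log_2 n}+C_\varepsilon$ quantifiers that is true in $\mathbf{B}_w$ for all $w\in\mathcal{A}$ and false in $\mathbf{B}_{w'}$ for all $w'\in\mathcal{B}$.
   Context: Vocabulary $\tau_{\mathsf{string}}=\langle <, S;\ \mathsf{min},\mathsf{max}\rangle$ with $<$ binary, $S$ unary, $\mathsf{min},\mathsf{max}$ constants. A string $w=w_1\cdots w_n\in\{0,1\}^n$ ($n\geq 1$) is encoded by the structure $\mathbf{B}_w$ with universe $\{1,\dots,n\}$, $<$ the usual order, $S=\{i: w_i=1\}$, $\mathsf{min}=1$, $\mathsf{max}=n$. The number of quantifiers is the number of quantifier occurrences. *)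

theory Defs
  imports Complex_Main
begin

text \<open>First-order logic over the vocabulary tau_string = (<, S; min, max).
  Variables are natural numbers.\<close>

datatype fterm = Var nat | MinC | MaxC

datatype fo =
    Less fterm fterm
  | Pred fterm
  | Eq fterm fterm
  | FTrue
  | Neg fo
  | Conj fo fo
  | Disj fo fo
  | Ex nat fo
  | All nat fo

fun tvars :: "fterm \<Rightarrow> nat set" where
  "tvars (Var x) = {x}"
| "tvars MinC = {}"
| "tvars MaxC = {}"

fun free_vars :: "fo \<Rightarrow> nat set" where
  "free_vars (Less s t) = tvars s \<union> tvars t"
| "free_vars (Pred t) = tvars t"
| "free_vars (Eq s t) = tvars s \<union> tvars t"
| "free_vars FTrue = {}"
| "free_vars (Neg f) = free_vars f"
| "free_vars (Conj f g) = free_vars f \<union> free_vars g"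
| "free_vars (Disj f g) = free_vars f \<union> free_vars g"
| "free_vars (Ex x f) = free_vars f - {x}"
| "free_vars (All x f) = free_vars f - {x}"

definition sentence :: "fo \<Rightarrow> bool" where
  "sentence f \<longleftrightarrow> free_vars f = {}"

fun nquant :: "fo \<Rightarrow> nat" where
  "nquant (Less s t) = 0"
| "nquant (Pred t) = 0"
| "nquant (Eq s t) = 0"
| "nquant FTrue = 0"
| "nquant (Neg f) = nquant f"
| "nquant (Conj f g) = nquant f + nquant g"
| "nquant (Disj f g) = nquant f + nquant g"
| "nquant (Ex x f) = Suc (nquant f)"
| "nquant (All x f) = Suc (nquant f)"

text \<open>The structure B_w for a string w = w_1 ... w_n (a bool list, True = 1):
  universe {1..n}, usual order, S = {i. w_i = 1}, min = 1, max = n.\<close>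

fun teval :: "bool list \<Rightarrow> (nat \<Rightarrow> nat) \<Rightarrow> fterm \<Rightarrow> nat" where
  "teval w \<sigma> (Var x) = \<sigma> x"
| "teval w \<sigma> MinC = 1"
| "teval w \<sigma> MaxC = length w"

fun sat :: "bool list \<Rightarrow> (nat \<Rightarrow> nat) \<Rightarrow> fo \<Rightarrow> bool" where
  "sat w \<sigma> (Less s t) \<longleftrightarrow> teval w \<sigma> s < teval w \<sigma> t"
| "sat w \<sigma> (Pred t) \<longleftrightarrow> w ! (teval w \<sigma> t - 1)"
| "sat w \<sigma> (Eq s t) \<longleftrightarrow> teval w \<sigma> s = teval w \<sigma> t"
| "sat w \<sigma> FTrue \<longleftrightarrow> True"
| "sat w \<sigma> (Neg f) \<longleftrightarrow> \<not> sat w \<sigma> f"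
| "sat w \<sigma> (Conj f g) \<longleftrightarrow> sat w \<sigma> f \<and> sat w \<sigma> g"
| "sat w \<sigma> (Disj f g) \<longleftrightarrow> sat w \<sigma> f \<or> sat w \<sigma> g"
| "sat w \<sigma> (Ex x f) \<longleftrightarrow> (\<exists>i\<in>{1..length w}. sat w (\<sigma>(x := i)) f)"
| "sat w \<sigma> (All x f) \<longleftrightarrow> (\<forall>i\<in>{1..length w}. sat w (\<sigma>(x := i)) f)"

text \<open>Truth of a sentence in B_w (assignment irrelevant for sentences; we fix 1).\<close>
definition holds :: "bool list \<Rightarrow> fo \<Rightarrow> bool" where
  "holds w f \<longleftrightarrow> sat w (\<lambda>_. 1) f"

end

theory Submission
  imports Defs "HOL-Combinatorics.Permutations" "HOL-Real_Asymp.Real_Asymp"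
begin

definition Imp :: "fo \<Rightarrow> fo \<Rightarrow> fo" where "Imp p q = Disj (Neg p) q"
definition BigConj :: "fo list \<Rightarrow> fo" where "BigConj fs = foldr Conj fs FTrue"
definition BigDisj :: "fo list \<Rightarrow> fo" where "BigDisj fs = foldr Disj fs (Neg FTrue)"

lemma sat_Imp[simp]: "sat w \<sigma> (Imp p q) \<longleftrightarrow> (sat w \<sigma> p \<longrightarrow> sat w \<sigma> q)"
  by (simp add: Imp_def)
lemma sat_BigConj[simp]: "sat w \<sigma> (BigConj fs) \<longleftrightarrow> (\<forall>f\<in>set fs. sat w \<sigma> f)"
  by (induction fs) (auto simp: BigConj_def)
lemma sat_BigDisj[simp]: "sat w \<sigma> (BigDisj fs) \<longleftrightarrow> (\<exists>f\<in>set fs. sat w \<sigma> f)"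
  by (induction fs) (auto simp: BigDisj_def)
lemma nquant_Imp[simp]: "nquant (Imp p q) = nquant p + nquant q" by (simp add: Imp_def)
lemma nquant_BigConj: "(\<forall>f\<in>set fs. nquant f = 0) \<Longrightarrow> nquant (BigConj fs) = 0"
  by (induction fs) (auto simp: BigConj_def)
lemma nquant_BigDisj: "(\<forall>f\<in>set fs. nquant f = 0) \<Longrightarrow> nquant (BigDisj fs) = 0"
  by (induction fs) (auto simp: BigDisj_def)
lemma fv_Imp[simp]: "free_vars (Imp p q) = free_vars p \<union> free_vars q" by (simp add: Imp_def)
lemma fv_BigConj: "(\<forall>f\<in>set fs. free_vars f \<subseteq> X) \<Longrightarrow> free_vars (BigConj fs) \<subseteq> X"
  by (induction fs) (auto simp: BigConj_def)
lemma fv_BigDisj: "(\<forall>f\<in>set fs. free_vars f \<subseteq> X) \<Longrightarrow> free_vars (BigDisj fs) \<subseteq> X"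
  by (induction fs) (auto simp: BigDisj_def)

fun G :: "nat \<Rightarrow> nat \<Rightarrow> nat \<Rightarrow> nat \<Rightarrow> fo \<Rightarrow> fo" where
  "G 0 a b v M = Conj (Less (Var a) (Var b))
      (Conj (All v (Neg (Conj (Less (Var a) (Var v)) (Less (Var v) (Var b))))) M)"
| "G (Suc s) a b v M = Ex v (All (Suc v) (All (Suc (Suc v))
      (Imp (Disj (Conj (Eq (Var (Suc v)) (Var a)) (Eq (Var (Suc (Suc v))) (Var v)))
                 (Conj (Eq (Var (Suc v)) (Var v)) (Eq (Var (Suc (Suc v))) (Var b))))
           (G s (Suc v) (Suc (Suc v)) (v+3) M))))"

fun lc :: "nat \<Rightarrow> nat \<Rightarrow> nat \<Rightarrow> nat" where
  "lc 0 a v = a" | "lc (Suc s) a v = lc s (Suc v) (v+3)"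
fun ld :: "nat \<Rightarrow> nat \<Rightarrow> nat \<Rightarrow> nat" where
  "ld 0 b v = b" | "ld (Suc s) b v = ld s (Suc (Suc v)) (v+3)"
fun off :: "nat \<Rightarrow> nat \<Rightarrow> nat \<Rightarrow> (nat \<Rightarrow> nat) \<Rightarrow> nat" where
  "off 0 a v \<sigma> = 0"
| "off (Suc s) a v \<sigma> = (if \<sigma> (Suc v) = \<sigma> a then 0 else 2^s) + off s (Suc v) (v+3) \<sigma>"
fun OffIs :: "nat \<Rightarrow> nat \<Rightarrow> nat \<Rightarrow> nat \<Rightarrow> fo" where
  "OffIs 0 a v j = (if j = 0 then FTrue else Neg FTrue)"
| "OffIs (Suc s) a v j = (if j < 2^s then Conj (Eq (Var (Suc v)) (Var a)) (OffIs s (Suc v) (v+3) j)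
      else Conj (Neg (Eq (Var (Suc v)) (Var a))) (OffIs s (Suc v) (v+3) (j - 2^s)))"

lemma off_lt: "off s a v \<sigma> < 2^s"
proof (induction s arbitrary: a v)
  case (Suc s)
  have "off s (Suc v) (v+3) \<sigma> < 2^s" by (rule Suc)
  then show ?case by simp
qed simp

lemma OffIs_sem: "sat w \<sigma> (OffIs s a v j) \<longleftrightarrow> off s a v \<sigma> = j"
proof (induction s arbitrary: a v j)
  case 0 then show ?case by auto
next
  case (Suc s)
  have l: "off s (Suc v) (v+3) \<sigma> < 2^s" by (rule off_lt)
  show ?case using l by (auto simp: Suc)
qed

lemma nquant_OffIs: "nquant (OffIs s a v j) = 0"
  by (induction s arbitrary: a v j) auto

lemma fv_OffIs: "free_vars (OffIs s a v j) \<subseteq> {a} \<union> {v..<v+3*s}"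
proof (induction s arbitrary: a v j)
  case (Suc s)
  have "free_vars (OffIs s (Suc v) (v+3) j') \<subseteq> {Suc v} \<union> {v+3..<v+3+3*s}" for j' by (rule Suc)
  then show ?case by (fastforce split: if_splits)
qed simp

lemma lc_range: "lc s a v \<in> {a} \<union> {v..<v+3*s}"
proof (induction s arbitrary: a v)
  case (Suc s)
  have "lc s (Suc v) (v+3) \<in> {Suc v} \<union> {v+3..<v+3+3*s}" by (rule Suc)
  then show ?case by auto
qed simp
lemma ld_range: "ld s b v \<in> {b} \<union> {v..<v+3*s}"
proof (induction s arbitrary: b v)
  case (Suc s)
  have "ld s (Suc (Suc v)) (v+3) \<in> {Suc (Suc v)} \<union> {v+3..<v+3+3*s}" by (rule Suc)
  then show ?case by auto
qed simp

lemma nquant_G: "nquant (G s a b v M) = 3*s + 1 + nquant M"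
  by (induction s arbitrary: a b v) auto

lemma fv_G: "free_vars (G s a b v M) \<subseteq> {a,b} \<union> (free_vars M - {v..<v+3*s})"
proof (induction s arbitrary: a b v)
  case (Suc s)
  have "free_vars (G s (Suc v) (Suc (Suc v)) (v+3) M) \<subseteq> {Suc v, Suc (Suc v)} \<union> (free_vars M - {v+3..<v+3+3*s})" by (rule Suc)
  then show ?case by auto
qed auto


lemma G_sound:
  assumes "sat w \<sigma> (G s a b v M)" "a < v" "b < v"
    "\<sigma> a \<in> {1..length w}" "\<sigma> b \<in> {1..length w}"
  shows "\<sigma> b = \<sigma> a + 2^s \<and> (\<forall>p. \<sigma> a \<le> p \<and> p \<le> \<sigma> b \<longrightarrow> (\<exists>\<sigma>'. (\<forall>x<v. \<sigma>' x = \<sigma> x) \<and> sat w \<sigma>' M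
       \<and> \<sigma>' (lc s a v) \<le> p \<and> p \<le> \<sigma>' (ld s b v) \<and> \<sigma>' (ld s b v) = \<sigma>' (lc s a v) + 1
       \<and> \<sigma>' (lc s a v) = \<sigma> a + off s a v \<sigma>'))"
  using assms
proof (induction s arbitrary: a b v \<sigma>)
  case 0
  from 0(1) have lt: "\<sigma> a < \<sigma> b" and nb: "\<forall>i\<in>{1..length w}. \<not> (\<sigma> a < i \<and> i < \<sigma> b)"
    and M: "sat w \<sigma> M" using 0(2,3) by auto
  have "\<sigma> b = \<sigma> a + 1"
  proof (rule ccontr)
    assume "\<sigma> b \<noteq> \<sigma> a + 1"
    then have "\<sigma> a + 1 \<in> {1..length w}" "\<sigma> a < \<sigma> a + 1" "\<sigma> a + 1 < \<sigma> b" using lt 0(5) by auto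
    then show False using nb by blast
  qed
  then show ?case using M by auto
next
  case (Suc s)
  let ?n = "length w"
  from Suc.prems(1) obtain z where z: "z \<in> {1..?n}" and
    H: "\<forall>c\<in>{1..?n}. \<forall>d\<in>{1..?n}. ((c = \<sigma> a \<and> d = z) \<or> (c = z \<and> d = \<sigma> b)) \<longrightarrow>
       sat w (\<sigma>(v := z, Suc v := c, Suc (Suc v) := d)) (G s (Suc v) (Suc (Suc v)) (v+3) M)"
    using Suc.prems(2,3) by auto
  define \<sigma>L where "\<sigma>L = \<sigma>(v := z, Suc v := \<sigma> a, Suc (Suc v) := z)"
  define \<sigma>R where "\<sigma>R = \<sigma>(v := z, Suc v := z, Suc (Suc v) := \<sigma> b)"
  have GL: "sat w \<sigma>L (G s (Suc v) (Suc (Suc v)) (v+3) M)" using H z Suc.prems(4) unfolding \<sigma>L_def by blast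
  have GR: "sat w \<sigma>R (G s (Suc v) (Suc (Suc v)) (v+3) M)" using H z Suc.prems(5) unfolding \<sigma>R_def by blast
  have L1: "\<sigma>L (Suc v) = \<sigma> a" "\<sigma>L (Suc (Suc v)) = z" "\<sigma>R (Suc v) = z" "\<sigma>R (Suc (Suc v)) = \<sigma> b"
    unfolding \<sigma>L_def \<sigma>R_def by auto
  have "Suc v < v+3" "Suc (Suc v) < v+3" by auto
  note IHL = Suc.IH[OF GL this, unfolded L1, OF Suc.prems(4) z]
  note IHR = Suc.IH[OF GR \<open>Suc v < v+3\<close> \<open>Suc (Suc v) < v+3\<close>, unfolded L1, OF z Suc.prems(5)]
  have zL: "z = \<sigma> a + 2^s" using IHL Suc.prems(4) z by auto
  have bR: "\<sigma> b = z + 2^s" using IHR Suc.prems(5) z by auto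
  have "\<forall>p. \<sigma> a \<le> p \<and> p \<le> \<sigma> b \<longrightarrow> (\<exists>\<sigma>'. (\<forall>x<v. \<sigma>' x = \<sigma> x) \<and> sat w \<sigma>' M
       \<and> \<sigma>' (lc (Suc s) a v) \<le> p \<and> p \<le> \<sigma>' (ld (Suc s) b v) \<and> \<sigma>' (ld (Suc s) b v) = \<sigma>' (lc (Suc s) a v) + 1
       \<and> \<sigma>' (lc (Suc s) a v) = \<sigma> a + off (Suc s) a v \<sigma>')"
  proof (intro allI impI)
    fix p assume p: "\<sigma> a \<le> p \<and> p \<le> \<sigma> b"
    show "\<exists>\<sigma>'. (\<forall>x<v. \<sigma>' x = \<sigma> x) \<and> sat w \<sigma>' M
       \<and> \<sigma>' (lc (Suc s) a v) \<le> p \<and> p \<le> \<sigma>' (ld (Suc s) b v) \<and> \<sigma>' (ld (Suc s) b v) = \<sigma>' (lc (Suc s) a v) + 1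
       \<and> \<sigma>' (lc (Suc s) a v) = \<sigma> a + off (Suc s) a v \<sigma>'"
    proof (cases "p \<le> z")
      case True
      then obtain \<sigma>' where s': "\<forall>x<v+3. \<sigma>' x = \<sigma>L x" "sat w \<sigma>' M"
        "\<sigma>' (lc s (Suc v) (v+3)) \<le> p" "p \<le> \<sigma>' (ld s (Suc (Suc v)) (v+3))"
        "\<sigma>' (ld s (Suc (Suc v)) (v+3)) = \<sigma>' (lc s (Suc v) (v+3)) + 1"
        "\<sigma>' (lc s (Suc v) (v+3)) = \<sigma>L (Suc v) + off s (Suc v) (v+3) \<sigma>'"
        using conjunct2[OF IHL, rule_format, of p] p unfolding L1 by blast
      have e1: "\<sigma>' (Suc v) = \<sigma> a" "\<sigma>' a = \<sigma> a" using s'(1) Suc.prems(2) unfolding \<sigma>L_def by auto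
      show ?thesis
        apply (rule exI[of _ \<sigma>'])
        using s' e1 Suc.prems(2) unfolding \<sigma>L_def by auto
    next
      case False
      then obtain \<sigma>' where s': "\<forall>x<v+3. \<sigma>' x = \<sigma>R x" "sat w \<sigma>' M"
        "\<sigma>' (lc s (Suc v) (v+3)) \<le> p" "p \<le> \<sigma>' (ld s (Suc (Suc v)) (v+3))"
        "\<sigma>' (ld s (Suc (Suc v)) (v+3)) = \<sigma>' (lc s (Suc v) (v+3)) + 1"
        "\<sigma>' (lc s (Suc v) (v+3)) = \<sigma>R (Suc v) + off s (Suc v) (v+3) \<sigma>'"
        using conjunct2[OF IHR, rule_format, of p] p unfolding L1 by auto
      have e1: "\<sigma>' (Suc v) = z" "\<sigma>' a = \<sigma> a" using s'(1) Suc.prems(2) unfolding \<sigma>R_def by auto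
      have ne: "z \<noteq> \<sigma> a" using zL by simp
      show ?thesis
        apply (rule exI[of _ \<sigma>'])
        using s' e1 ne zL Suc.prems(2) unfolding \<sigma>R_def by auto
    qed
  qed
  then show ?case using zL bR by auto
qed

lemma G_complete:
  assumes "a < v" "b < v" "1 \<le> \<sigma> a" "\<sigma> b \<le> length w" "\<sigma> b = \<sigma> a + 2^s"
    "\<And>\<sigma>'. (\<forall>x<v. \<sigma>' x = \<sigma> x) \<Longrightarrow> \<sigma>' (ld s b v) = \<sigma>' (lc s a v) + 1 \<Longrightarrow>
       \<sigma>' (lc s a v) = \<sigma> a + off s a v \<sigma>' \<Longrightarrow> sat w \<sigma>' M"
  shows "sat w \<sigma> (G s a b v M)"
  using assms
proof (induction s arbitrary: a b v \<sigma>)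
  case 0
  have "sat w \<sigma> M" using 0(6)[of \<sigma>] 0(5) by simp
  then show ?case using 0(5) 0(1,2) by auto
next
  case (Suc s)
  let ?n = "length w"
  let ?z = "\<sigma> a + 2^s"
  have zr: "?z \<in> {1..?n}" using Suc.prems(3,4,5) by auto
  have "\<forall>c\<in>{1..?n}. \<forall>d\<in>{1..?n}. ((c = \<sigma> a \<and> d = ?z) \<or> (c = ?z \<and> d = \<sigma> b)) \<longrightarrow>
       sat w (\<sigma>(v := ?z, Suc v := c, Suc (Suc v) := d)) (G s (Suc v) (Suc (Suc v)) (v+3) M)"
  proof (intro ballI impI)
    fix c d assume cd: "c \<in> {1..?n}" "d \<in> {1..?n}" "(c = \<sigma> a \<and> d = ?z) \<or> (c = ?z \<and> d = \<sigma> b)"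
    let ?\<tau> = "\<sigma>(v := ?z, Suc v := c, Suc (Suc v) := d)"
    show "sat w ?\<tau> (G s (Suc v) (Suc (Suc v)) (v+3) M)"
    proof (rule Suc.IH)
      show "Suc v < v+3" "Suc (Suc v) < v+3" by auto
      show "1 \<le> ?\<tau> (Suc v)" "?\<tau> (Suc (Suc v)) \<le> ?n" using cd by auto
      show "?\<tau> (Suc (Suc v)) = ?\<tau> (Suc v) + 2^s" using cd Suc.prems(5) by auto
      fix \<sigma>' assume h: "\<forall>x<v+3. \<sigma>' x = ?\<tau> x"
        "\<sigma>' (ld s (Suc (Suc v)) (v+3)) = \<sigma>' (lc s (Suc v) (v+3)) + 1"
        "\<sigma>' (lc s (Suc v) (v+3)) = ?\<tau> (Suc v) + off s (Suc v) (v+3) \<sigma>'"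
      have ag: "\<forall>x<v. \<sigma>' x = \<sigma> x" using h(1) by auto
      have sa: "\<sigma>' a = \<sigma> a" "\<sigma>' (Suc v) = c" using h(1) Suc.prems(1) by auto
      have "\<sigma>' (lc (Suc s) a v) = \<sigma> a + off (Suc s) a v \<sigma>'"
        using cd(3) h(3) sa by auto
      then show "sat w \<sigma>' M" using Suc.prems(6)[OF ag] h(2) by auto
    qed
  qed
  then show ?case
    apply (simp only: G.simps sat.simps(8))
    apply (rule bexI[OF _ zr])
    using Suc.prems(1,2) by auto
qed


definition Exs :: "nat list \<Rightarrow> fo \<Rightarrow> fo" where "Exs xs f = foldr Ex xs f"

lemma sat_Exs: "sat w \<sigma> (Exs xs f) \<longleftrightarrow>
   (\<exists>\<tau>. (\<forall>x. x \<notin> set xs \<longrightarrow> \<tau> x = \<sigma> x) \<and> (\<forall>x\<in>set xs. \<tau> x \<in> {1..length w}) \<and> sat w \<tau> f)"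
proof (induction xs arbitrary: \<sigma>)
  case Nil
  show ?case unfolding Exs_def by (auto intro: exI[of _ \<sigma>]) (metis ext)
next
  case (Cons x xs)
  have "sat w \<sigma> (Exs (x#xs) f) \<longleftrightarrow> (\<exists>i\<in>{1..length w}. sat w (\<sigma>(x:=i)) (Exs xs f))"
    by (simp add: Exs_def)
  also have "\<dots> \<longleftrightarrow> (\<exists>i\<in>{1..length w}. \<exists>\<tau>. (\<forall>y. y \<notin> set xs \<longrightarrow> \<tau> y = (\<sigma>(x:=i)) y) \<and> (\<forall>y\<in>set xs. \<tau> y \<in> {1..length w}) \<and> sat w \<tau> f)"
    using Cons by simp
  also have "\<dots> \<longleftrightarrow> (\<exists>\<tau>. (\<forall>y. y \<notin> set (x#xs) \<longrightarrow> \<tau> y = \<sigma> y) \<and> (\<forall>y\<in>set (x#xs). \<tau> y \<in> {1..length w}) \<and> sat w \<tau> f)"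
  proof
    assume "\<exists>i\<in>{1..length w}. \<exists>\<tau>. (\<forall>y. y \<notin> set xs \<longrightarrow> \<tau> y = (\<sigma>(x:=i)) y) \<and> (\<forall>y\<in>set xs. \<tau> y \<in> {1..length w}) \<and> sat w \<tau> f"
    then obtain i \<tau> where "i \<in> {1..length w}" "\<forall>y. y \<notin> set xs \<longrightarrow> \<tau> y = (\<sigma>(x:=i)) y" "\<forall>y\<in>set xs. \<tau> y \<in> {1..length w}" "sat w \<tau> f"
      by blast
    then show "\<exists>\<tau>. (\<forall>y. y \<notin> set (x#xs) \<longrightarrow> \<tau> y = \<sigma> y) \<and> (\<forall>y\<in>set (x#xs). \<tau> y \<in> {1..length w}) \<and> sat w \<tau> f"
      by (intro exI[of _ \<tau>]) (auto split: if_splits)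
  next
    assume "\<exists>\<tau>. (\<forall>y. y \<notin> set (x#xs) \<longrightarrow> \<tau> y = \<sigma> y) \<and> (\<forall>y\<in>set (x#xs). \<tau> y \<in> {1..length w}) \<and> sat w \<tau> f"
    then obtain \<tau> where t: "\<forall>y. y \<notin> set (x#xs) \<longrightarrow> \<tau> y = \<sigma> y" "\<forall>y\<in>set (x#xs). \<tau> y \<in> {1..length w}" "sat w \<tau> f"
      by blast
    show "\<exists>i\<in>{1..length w}. \<exists>\<tau>. (\<forall>y. y \<notin> set xs \<longrightarrow> \<tau> y = (\<sigma>(x:=i)) y) \<and> (\<forall>y\<in>set xs. \<tau> y \<in> {1..length w}) \<and> sat w \<tau> f"
      apply (rule bexI[of _ "\<tau> x"])
       apply (rule exI[of _ \<tau>])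
      using t by auto
  qed
  finally show ?case .
qed

lemma nquant_Exs: "nquant (Exs xs f) = length xs + nquant f"
  by (induction xs) (auto simp: Exs_def)
lemma fv_Exs: "free_vars (Exs xs f) = free_vars f - set xs"
  by (induction xs) (auto simp: Exs_def)

definition lit :: "bool \<Rightarrow> fo \<Rightarrow> fo" where "lit b f = (if b then f else Neg f)"
lemma sat_lit[simp]: "sat w \<sigma> (lit b f) \<longleftrightarrow> (sat w \<sigma> f \<longleftrightarrow> b)" by (simp add: lit_def)
lemma nquant_lit[simp]: "nquant (lit b f) = nquant f" by (simp add: lit_def)
lemma fv_lit[simp]: "free_vars (lit b f) = free_vars f" by (simp add: lit_def)

definition Pat :: "(nat \<Rightarrow> nat) \<Rightarrow> nat \<Rightarrow> fo" where
  "Pat e k = BigConj (map (\<lambda>i. Conj (lit (e i = 1) (Eq (Var i) MinC))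
      (BigConj (map (\<lambda>j. lit (e i < e j) (Less (Var i) (Var j))) [0..<k]))) [0..<k])"

lemma sat_Pat: "sat w \<sigma> (Pat e k) \<longleftrightarrow> (\<forall>i<k. (\<sigma> i = 1 \<longleftrightarrow> e i = 1) \<and> (\<forall>j<k. \<sigma> i < \<sigma> j \<longleftrightarrow> e i < e j))"
  by (auto simp: Pat_def)
lemma nquant_Pat: "nquant (Pat e k) = 0"
  unfolding Pat_def by (auto intro!: nquant_BigConj)
lemma fv_Pat: "free_vars (Pat e k) \<subseteq> {..<k}"
proof -
  have inner: "free_vars (BigConj (map (\<lambda>j. lit (e i < e j) (Less (Var i) (Var j))) [0..<k])) \<subseteq> {..<k}"
    if "i < k" for i
    by (rule fv_BigConj) (use that in auto)
  show ?thesis unfolding Pat_def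
    by (rule fv_BigConj) (use inner in fastforce)
qed

definition good_enc :: "nat \<Rightarrow> nat \<Rightarrow> (bool list \<Rightarrow> nat \<Rightarrow> nat) \<Rightarrow> bool" where
  "good_enc n k enc \<longleftrightarrow> (\<forall>w. length w = n \<longrightarrow> (\<forall>i<k. enc w i \<in> {1..n})) \<and>
     (\<forall>w w'. length w = n \<longrightarrow> length w' = n \<longrightarrow>
        (\<forall>i<k. (enc w i = 1 \<longleftrightarrow> enc w' i = 1) \<and> (\<forall>j<k. enc w i < enc w j \<longleftrightarrow> enc w' i < enc w' j)) \<longrightarrow> w = w')"

definition allstr :: "nat \<Rightarrow> bool list list" where "allstr n = List.n_lists n [False, True]"
lemma set_allstr[simp]: "set (allstr n) = {w. length w = n}"
  by (auto simp: allstr_def set_n_lists)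

definition LeafCheck :: "(bool list \<Rightarrow> nat \<Rightarrow> nat) \<Rightarrow> nat \<Rightarrow> nat \<Rightarrow> nat \<Rightarrow> nat \<Rightarrow> fo" where
  "LeafCheck enc n k T P = BigConj (map (\<lambda>w0. Imp (Pat (enc w0) k)
      (Conj (lit (w0!(P-1)) (Pred (Var (lc T (k+2) (k+4))))) (lit (w0!P) (Pred (Var (ld T (k+3) (k+4)))))))
      (allstr n))"

lemma sat_LeafCheck: "sat w \<sigma> (LeafCheck enc n k T P) \<longleftrightarrow> (\<forall>w0. length w0 = n \<longrightarrow> sat w \<sigma> (Pat (enc w0) k) \<longrightarrow>
   (w ! (\<sigma> (lc T (k+2) (k+4)) - 1) = w0!(P-1)) \<and> (w ! (\<sigma> (ld T (k+3) (k+4)) - 1) = w0!P))"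
  unfolding LeafCheck_def by auto

definition Mf :: "(bool list \<Rightarrow> nat \<Rightarrow> nat) \<Rightarrow> nat \<Rightarrow> nat \<Rightarrow> nat \<Rightarrow> fo" where
  "Mf enc n k T = BigConj (map (\<lambda>(bs,j). Imp (Conj (lit bs (Eq (Var (k+2)) MinC)) (OffIs T (k+2) (k+4) j))
      (LeafCheck enc n k T ((if bs then 1 else n - 2^T) + j))) (List.product [True,False] [0..<2^T]))"

lemma sat_Mf: "sat w \<sigma> (Mf enc n k T) \<longleftrightarrow>
   sat w \<sigma> (LeafCheck enc n k T ((if \<sigma> (k+2) = 1 then 1 else n - 2^T) + off T (k+2) (k+4) \<sigma>))"
proof -
  let ?o = "off T (k+2) (k+4) \<sigma>"
  let ?bs = "\<sigma> (k+2) = 1"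
  have lt: "?o < 2^T" by (rule off_lt)
  have mem: "(?bs, ?o) \<in> set (List.product [True,False] [0..<2^T])" using lt by auto
  let ?F = "\<lambda>(bs,j). Imp (Conj (lit bs (Eq (Var (k+2)) MinC)) (OffIs T (k+2) (k+4) j))
      (LeafCheck enc n k T ((if bs then 1 else n - 2^T) + j))"
  have "sat w \<sigma> (Mf enc n k T) \<longleftrightarrow> (\<forall>x\<in>set (List.product [True,False] [0..<2^T]). sat w \<sigma> (?F x))"
    unfolding Mf_def sat_BigConj set_map by blast
  also have "\<dots> \<longleftrightarrow> sat w \<sigma> (?F (?bs, ?o))"
  proof
    assume "\<forall>x\<in>set (List.product [True,False] [0..<2^T]). sat w \<sigma> (?F x)"
    then show "sat w \<sigma> (?F (?bs, ?o))" using mem by blast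
  next
    assume h: "sat w \<sigma> (?F (?bs, ?o))"
    show "\<forall>x\<in>set (List.product [True,False] [0..<2^T]). sat w \<sigma> (?F x)"
    proof
      fix x assume "x \<in> set (List.product [True,False] [0..<2^T])"
      obtain bs j where x: "x = (bs, j)" by force
      show "sat w \<sigma> (?F x)"
      proof (cases "bs = ?bs \<and> j = ?o")
        case True then show ?thesis using h x by simp
      next
        case False then show ?thesis using x by (auto simp: OffIs_sem)
      qed
    qed
  qed
  also have "\<dots> \<longleftrightarrow> sat w \<sigma> (LeafCheck enc n k T ((if ?bs then 1 else n - 2^T) + ?o))"
    by (simp add: OffIs_sem)
  finally show ?thesis .
qed


definition Top :: "(bool list \<Rightarrow> nat \<Rightarrow> nat) \<Rightarrow> nat \<Rightarrow> nat \<Rightarrow> nat \<Rightarrow> fo" where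
  "Top enc n k T = Ex k (Ex (k+1) (All (k+2) (All (k+3)
     (Imp (Disj (Conj (Eq (Var (k+2)) MinC) (Eq (Var (k+3)) (Var k)))
                (Conj (Eq (Var (k+2)) (Var (k+1))) (Eq (Var (k+3)) MaxC)))
          (G T (k+2) (k+3) (k+4) (Mf enc n k T))))))"

definition Phi :: "(bool list \<Rightarrow> nat \<Rightarrow> nat) \<Rightarrow> nat \<Rightarrow> nat \<Rightarrow> nat \<Rightarrow> bool list set \<Rightarrow> fo" where
  "Phi enc n k T A = Exs [0..<k] (Conj (BigDisj (map (\<lambda>w0. Pat (enc w0) k) (filter (\<lambda>w0. w0 \<in> A) (allstr n))))
       (Top enc n k T))"

lemma nquant_Mf: "nquant (Mf enc n k T) = 0"
  unfolding Mf_def LeafCheck_def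
  by (intro nquant_BigConj) (auto simp: nquant_OffIs nquant_Pat intro!: nquant_BigConj)

lemma nquant_Phi: "nquant (Phi enc n k T A) = k + 3*T + 5"
  unfolding Phi_def Top_def
  by (simp add: nquant_Exs nquant_G nquant_Mf nquant_BigDisj nquant_Pat)

lemma fv_Mf: "free_vars (Mf enc n k T) \<subseteq> {..<k} \<union> {k+2, k+3} \<union> {k+4..<k+4+3*T}"
proof -
  have lcr: "lc T (k+2) (k+4) \<in> {k+2} \<union> {k+4..<k+4+3*T}" by (rule lc_range)
  have ldr: "ld T (k+3) (k+4) \<in> {k+3} \<union> {k+4..<k+4+3*T}" by (rule ld_range)
  have L: "free_vars (LeafCheck enc n k T P) \<subseteq> {..<k} \<union> {k+2, k+3} \<union> {k+4..<k+4+3*T}" for P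
    unfolding LeafCheck_def
    apply (rule fv_BigConj)
    using fv_Pat lcr ldr by fastforce
  have O: "free_vars (OffIs T (k+2) (k+4) j) \<subseteq> {k+2} \<union> {k+4..<k+4+3*T}" for j by (rule fv_OffIs)
  show ?thesis unfolding Mf_def
    apply (rule fv_BigConj)
    using L O by fastforce
qed

lemma sentence_Phi: "sentence (Phi enc n k T A)"
proof -
  have g: "free_vars (G T (k+2) (k+3) (k+4) (Mf enc n k T)) \<subseteq> {..<k} \<union> {k+2,k+3}"
    using fv_G[of T "k+2" "k+3" "k+4" "Mf enc n k T"] fv_Mf[of enc n k T] by auto
  have t: "free_vars (Top enc n k T) \<subseteq> {..<k}"
    unfolding Top_def using g by auto
  have d: "free_vars (BigDisj (map (\<lambda>w0. Pat (enc w0) k) (filter (\<lambda>w0. w0 \<in> A) (allstr n)))) \<subseteq> {..<k}"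
    by (rule fv_BigDisj) (use fv_Pat in auto)
  show ?thesis unfolding sentence_def Phi_def fv_Exs using t d by auto
qed


lemma Phi_complete:
  assumes enc: "good_enc n k enc" and wA: "w \<in> A" and len: "length w = n"
    and T: "2^T \<le> n - 1" and n2: "2 \<le> n"
  shows "holds w (Phi enc n k T A)"
proof -
  let ?L = "2^T :: nat"
  define \<tau> where "\<tau> = (\<lambda>i. if i < k then enc w i else 1)"
  have encr: "\<forall>i<k. enc w i \<in> {1..n}" using enc len unfolding good_enc_def by blast
  have Pw: "sat w \<tau> (Pat (enc w) k)" unfolding sat_Pat \<tau>_def by auto
  have D: "sat w \<tau> (BigDisj (map (\<lambda>w0. Pat (enc w0) k) (filter (\<lambda>w0. w0 \<in> A) (allstr n))))"
    using Pw wA len by auto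
  have Mgood: "sat w \<sigma>' (Mf enc n k T)"
    if ag: "\<forall>x<k. \<sigma>' x = enc w x" and c: "\<sigma>' (k+2) = 1 \<or> \<sigma>' (k+2) = n - ?L"
      and ld: "\<sigma>' (ld T (k+3) (k+4)) = \<sigma>' (lc T (k+2) (k+4)) + 1"
      and lcv: "\<sigma>' (lc T (k+2) (k+4)) = \<sigma>' (k+2) + off T (k+2) (k+4) \<sigma>'" for \<sigma>'
  proof -
    have st: "(if \<sigma>' (k+2) = 1 then 1 else n - ?L) = \<sigma>' (k+2)" using c by auto
    show ?thesis unfolding sat_Mf st sat_LeafCheck
    proof (intro allI impI)
      fix w0 assume l0: "length w0 = n" and P: "sat w \<sigma>' (Pat (enc w0) k)"
      have "w0 = w"
        using enc l0 len P ag unfolding good_enc_def sat_Pat by (metis (no_types, lifting))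
      then show "w ! (\<sigma>' (lc T (k+2) (k+4)) - 1) = w0 ! (\<sigma>' (k+2) + off T (k+2) (k+4) \<sigma>' - 1) \<and>
          w ! (\<sigma>' (ld T (k+3) (k+4)) - 1) = w0 ! (\<sigma>' (k+2) + off T (k+2) (k+4) \<sigma>')"
        using ld lcv by simp
    qed
  qed
  have TopS: "sat w \<tau> (Top enc n k T)"
    unfolding Top_def sat.simps(8)
  proof (rule bexI[of _ "1 + ?L"], rule bexI[of _ "n - ?L"])
    show "1 + ?L \<in> {1..length w}" "n - ?L \<in> {1..length w}" using T len n2 by auto
    let ?\<tau>2 = "\<tau>(k := 1 + ?L, k+1 := n - ?L)"
    show "sat w ?\<tau>2 (All (k+2) (All (k+3)
     (Imp (Disj (Conj (Eq (Var (k+2)) MinC) (Eq (Var (k+3)) (Var k)))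
                (Conj (Eq (Var (k+2)) (Var (k+1))) (Eq (Var (k+3)) MaxC)))
          (G T (k+2) (k+3) (k+4) (Mf enc n k T)))))"
      unfolding sat.simps(9) sat_Imp
    proof (intro ballI impI)
      fix c d assume cr: "c \<in> {1..length w}" and dr: "d \<in> {1..length w}"
      let ?\<sigma> = "?\<tau>2(k+2 := c, k+3 := d)"
      assume "sat w ?\<sigma> (Disj (Conj (Eq (Var (k+2)) MinC) (Eq (Var (k+3)) (Var k)))
                (Conj (Eq (Var (k+2)) (Var (k+1))) (Eq (Var (k+3)) MaxC)))"
      then have cd: "(c = 1 \<and> d = 1 + ?L) \<or> (c = n - ?L \<and> d = n)" using len by auto
      show "sat w ?\<sigma> (G T (k+2) (k+3) (k+4) (Mf enc n k T))"
      proof (rule G_complete)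
        show "k+2 < k+4" "k+3 < k+4" by auto
        show "1 \<le> ?\<sigma> (k+2)" "?\<sigma> (k+3) \<le> length w" using cr dr by auto
        show "?\<sigma> (k+3) = ?\<sigma> (k+2) + 2^T" using cd T by auto
        fix \<sigma>' assume h: "\<forall>x<k+4. \<sigma>' x = ?\<sigma> x"
          "\<sigma>' (ld T (k+3) (k+4)) = \<sigma>' (lc T (k+2) (k+4)) + 1"
          "\<sigma>' (lc T (k+2) (k+4)) = ?\<sigma> (k+2) + off T (k+2) (k+4) \<sigma>'"
        have ag: "\<forall>x<k. \<sigma>' x = enc w x" using h(1) unfolding \<tau>_def by auto
        have c2: "\<sigma>' (k+2) = c" using h(1) by auto
        show "sat w \<sigma>' (Mf enc n k T)"
          using Mgood[OF ag] c2 cd h(2,3) by auto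
      qed
    qed
  qed
  show ?thesis unfolding holds_def Phi_def sat_Exs
    apply (rule exI[of _ \<tau>])
    using encr D TopS len unfolding \<tau>_def by auto
qed


lemma Phi_sound:
  assumes H: "holds w (Phi enc n k T A)" and len: "length w = n"
    and T: "2^T \<le> n - 1" and T2: "n - 1 \<le> 2 * 2^T" and n2: "2 \<le> n"
  shows "w \<in> A"
proof -
  let ?L = "2^T :: nat"
  obtain \<tau> where tr: "\<forall>x. x \<notin> set [0..<k] \<longrightarrow> \<tau> x = 1"
    and D: "sat w \<tau> (BigDisj (map (\<lambda>w0. Pat (enc w0) k) (filter (\<lambda>w0. w0 \<in> A) (allstr n))))"
    and TopS: "sat w \<tau> (Top enc n k T)"
    using H unfolding holds_def Phi_def sat_Exs by auto
  from D obtain w0 where w0A: "w0 \<in> A" and l0: "length w0 = n" and P0: "sat w \<tau> (Pat (enc w0) k)"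
    by auto
  from TopS obtain y1 y2 where y1: "y1 \<in> {1..n}" and y2: "y2 \<in> {1..n}" and
    HH: "\<forall>c\<in>{1..n}. \<forall>d\<in>{1..n}. ((c = 1 \<and> d = y1) \<or> (c = y2 \<and> d = n)) \<longrightarrow>
       sat w (\<tau>(k := y1, k+1 := y2, k+2 := c, k+3 := d)) (G T (k+2) (k+3) (k+4) (Mf enc n k T))"
    unfolding Top_def using len by auto
  have leafok: "w ! (p - 1) = w0 ! (p - 1)"
    if ag: "\<forall>x<k+4. \<sigma>' x = (\<tau>(k := y1, k+1 := y2, k+2 := c, k+3 := d)) x"
      and st: "(if c = 1 then 1 else n - ?L) = c"
      and M: "sat w \<sigma>' (Mf enc n k T)"
      and p: "\<sigma>' (lc T (k+2) (k+4)) \<le> p" "p \<le> \<sigma>' (ld T (k+3) (k+4))"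
      and ldv: "\<sigma>' (ld T (k+3) (k+4)) = \<sigma>' (lc T (k+2) (k+4)) + 1"
      and lcv: "\<sigma>' (lc T (k+2) (k+4)) = c + off T (k+2) (k+4) \<sigma>'"
    for \<sigma>' c d p
  proof -
    have c2: "\<sigma>' (k+2) = c" using ag by auto
    have Pp: "sat w \<sigma>' (Pat (enc w0) k)" using P0 ag unfolding sat_Pat by auto
    have "w ! (\<sigma>' (lc T (k+2) (k+4)) - 1) = w0 ! (c + off T (k+2) (k+4) \<sigma>' - 1) \<and>
          w ! (\<sigma>' (ld T (k+3) (k+4)) - 1) = w0 ! (c + off T (k+2) (k+4) \<sigma>')"
      using M l0 Pp unfolding sat_Mf c2 st sat_LeafCheck by blast
    moreover have "p = \<sigma>' (lc T (k+2) (k+4)) \<or> p = \<sigma>' (ld T (k+3) (k+4))" using p ldv by linarith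
    ultimately show ?thesis using ldv lcv by auto
  qed
  have n1: "1 \<in> {1..n}" "n \<in> {1..n}" using n2 by auto
  have GL: "sat w (\<tau>(k := y1, k+1 := y2, k+2 := 1, k+3 := y1)) (G T (k+2) (k+3) (k+4) (Mf enc n k T))"
    using HH n1 y1 by blast
  have GR: "sat w (\<tau>(k := y1, k+1 := y2, k+2 := y2, k+3 := n)) (G T (k+2) (k+3) (k+4) (Mf enc n k T))"
    using HH n1 y2 by blast
  have kk: "k+2 < k+4" "k+3 < k+4" by auto
  have r1: "(\<tau>(k := y1, k+1 := y2, k+2 := 1, k+3 := y1)) (k+2) = 1"
     "(\<tau>(k := y1, k+1 := y2, k+2 := 1, k+3 := y1)) (k+3) = y1"
     "(\<tau>(k := y1, k+1 := y2, k+2 := y2, k+3 := n)) (k+2) = y2"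
     "(\<tau>(k := y1, k+1 := y2, k+2 := y2, k+3 := n)) (k+3) = n" by auto
  note SL = G_sound[OF GL kk, unfolded r1 len, OF n1(1) y1]
  note SR = G_sound[OF GR kk, unfolded r1 len, OF y2 n1(2)]
  have y1v: "y1 = 1 + ?L" using SL by simp
  have y2v: "n = y2 + ?L" using SR len by simp
  have all: "w ! (p - 1) = w0 ! (p - 1)" if pr: "1 \<le> p" "p \<le> n" for p
  proof (cases "p \<le> y1")
    case True
    then obtain \<sigma>' where s': "\<forall>x<k+4. \<sigma>' x = (\<tau>(k := y1, k+1 := y2, k+2 := 1, k+3 := y1)) x"
      "sat w \<sigma>' (Mf enc n k T)" "\<sigma>' (lc T (k+2) (k+4)) \<le> p" "p \<le> \<sigma>' (ld T (k+3) (k+4))"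
      "\<sigma>' (ld T (k+3) (k+4)) = \<sigma>' (lc T (k+2) (k+4)) + 1"
      "\<sigma>' (lc T (k+2) (k+4)) = 1 + off T (k+2) (k+4) \<sigma>'"
      using conjunct2[OF SL, rule_format, of p] pr by auto
    show ?thesis by (rule leafok[OF s'(1) _ s'(2-6)]) simp
  next
    case False
    then have "y2 \<le> p" using y1v y2v T2 by auto
    then obtain \<sigma>' where s': "\<forall>x<k+4. \<sigma>' x = (\<tau>(k := y1, k+1 := y2, k+2 := y2, k+3 := n)) x"
      "sat w \<sigma>' (Mf enc n k T)" "\<sigma>' (lc T (k+2) (k+4)) \<le> p" "p \<le> \<sigma>' (ld T (k+3) (k+4))"
      "\<sigma>' (ld T (k+3) (k+4)) = \<sigma>' (lc T (k+2) (k+4)) + 1"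
      "\<sigma>' (lc T (k+2) (k+4)) = y2 + off T (k+2) (k+4) \<sigma>'"
      using conjunct2[OF SR, rule_format, of p] pr len by auto
    have "(if y2 = 1 then 1 else n - ?L) = y2" using y2v by auto
    then show ?thesis by (rule leafok[OF s'(1) _ s'(2-6)])
  qed
  have "w = w0"
  proof (rule nth_equalityI)
    show "length w = length w0" using len l0 by simp
    fix i assume "i < length w"
    then show "w ! i = w0 ! i" using all[of "i+1"] len by auto
  qed
  then show ?thesis using w0A by simp
qed


lemma enc_small: "2 \<le> n \<Longrightarrow> good_enc n n (\<lambda>w i. if w!i then 1 else 2)"
  unfolding good_enc_def
  by (auto intro!: nth_equalityI split: if_splits)

lemma perm_rank:
  assumes p: "p permutes {..<k}" and i: "i < k"
  shows "card {j. j < k \<and> p j < p i} = p i"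
proof -
  have img: "p ` {j. j < k \<and> p j < p i} = {..<p i}"
  proof
    show "p ` {j. j < k \<and> p j < p i} \<subseteq> {..<p i}" by auto
  next
    show "{..<p i} \<subseteq> p ` {j. j < k \<and> p j < p i}"
    proof
      fix x assume x: "x \<in> {..<p i}"
      have "p i < k" using permutes_in_image[OF p] i by auto
      then have "x \<in> p ` {..<k}" using x permutes_image[OF p] by auto
      then obtain j where "j < k" "x = p j" by auto
      then show "x \<in> p ` {j. j < k \<and> p j < p i}" using x by auto
    qed
  qed
  have "card (p ` {j. j < k \<and> p j < p i}) = card {j. j < k \<and> p j < p i}"
    by (rule card_image) (rule permutes_inj_on[OF p])
  then show ?thesis using img by simp
qed

lemma enc_perm:
  assumes kn: "k \<le> n" and f: "(2::nat)^n \<le> fact k"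
  shows "\<exists>enc. good_enc n k enc"
proof -
  let ?S1 = "{w :: bool list. length w = n}"
  let ?S2 = "{p. p permutes {..<k}}"
  have c1: "card ?S1 = 2^n"
    using card_lists_length_eq[of "UNIV :: bool set" n] by simp
  have f1: "finite ?S1" using finite_lists_length_eq[of "UNIV :: bool set" n] by simp
  have c2: "card ?S2 = fact k" by (rule card_permutations) auto
  have f2: "finite ?S2" by (rule finite_permutations) auto
  obtain g where g: "g ` ?S1 \<subseteq> ?S2" "inj_on g ?S1"
    using card_le_inj[OF f1 f2] c1 c2 f by auto
  define enc where "enc = (\<lambda>w i. g w i + 1)"
  have "good_enc n k enc"
    unfolding good_enc_def
  proof (intro conjI allI impI)
    fix w :: "bool list" and i assume w: "length w = n" and i: "i < k"
    have p: "g w permutes {..<k}" using g w by auto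
    have "g w i < k" using permutes_in_image[OF p] i by auto
    then show "enc w i \<in> {1..n}" using kn unfolding enc_def by auto
  next
    fix w w' :: "bool list" assume w: "length w = n" and w': "length w' = n"
      and T: "\<forall>i<k. (enc w i = 1 \<longleftrightarrow> enc w' i = 1) \<and> (\<forall>j<k. enc w i < enc w j \<longleftrightarrow> enc w' i < enc w' j)"
    have p: "g w permutes {..<k}" and p': "g w' permutes {..<k}" using g w w' by auto
    have "g w = g w'"
    proof
      fix i show "g w i = g w' i"
      proof (cases "i < k")
        case True
        have "{j. j < k \<and> g w j < g w i} = {j. j < k \<and> g w' j < g w' i}"
          using T True unfolding enc_def by auto
        then show ?thesis using perm_rank[OF p True] perm_rank[OF p' True] by simp
      next
        case False
        then show ?thesis using permutes_not_in[OF p] permutes_not_in[OF p'] by auto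
      qed
    qed
    then show "w = w'" using g(2) w w' by (auto dest: inj_onD)
  qed
  then show ?thesis by blast
qed

lemma construct:
  assumes n2: "2 \<le> n" and enc: "good_enc n k enc" and A: "A \<subseteq> {w. length w = n}"
    and B: "B \<subseteq> {w. length w = n}" and AB: "A \<inter> B = {}"
  shows "\<exists>\<phi> T. 2^T \<le> n \<and> sentence \<phi> \<and> nquant \<phi> = k + 3*T + 5 \<and> (\<forall>w\<in>A. holds w \<phi>) \<and> (\<forall>w\<in>B. \<not> holds w \<phi>)"
proof -
  obtain T where T: "2^T \<le> n - 1" "n - 1 < 2^(T+1)"
  proof -
    have "1 \<le> n - 1" using n2 by simp
    then show ?thesis using ex_power_ivl1[of 2 "n-1"] that by auto
  qed
  have T2: "n - 1 \<le> 2 * 2^T" using T by simp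
  let ?\<phi> = "Phi enc n k T A"
  have "\<forall>w\<in>A. holds w ?\<phi>" using Phi_complete[OF enc _ _ T(1) n2] A by blast
  moreover have "\<forall>w\<in>B. \<not> holds w ?\<phi>" using Phi_sound[OF _ _ T(1) T2 n2] B AB by blast
  moreover have "2^T \<le> n" using T by simp
  ultimately show ?thesis using sentence_Phi nquant_Phi by blast
qed


lemma pow_fact_le_exp:
  assumes "0 \<le> x" shows "x ^ k / fact k \<le> exp (x::real)"
proof -
  have s: "(\<lambda>n. x^n /\<^sub>R fact n) sums exp x" by (rule exp_converges)
  have "sum (\<lambda>n. x^n /\<^sub>R fact n) {k} \<le> suminf (\<lambda>n. x^n /\<^sub>R fact n)"
    by (rule sum_le_suminf) (use s assms in \<open>auto simp: sums_iff\<close>)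
  then show ?thesis using s by (simp add: sums_iff divide_inverse mult.commute)
qed

lemma lim1: "((\<lambda>n::nat. (log 2 (log 2 (real n)) + 1 / ln 2) / log 2 (real n)) \<longlongrightarrow> 0) sequentially"
  by real_asymp
lemma lim2: "filterlim (\<lambda>n::nat. log 2 (real n)) at_top sequentially"
  by real_asymp
lemma lim3: "((\<lambda>n::nat. (3 * log 2 (real n) + 6) * log 2 (real n) / real n) \<longlongrightarrow> 0) sequentially"
  by real_asymp


lemma fact_ln_lb:
  assumes "0 < k" shows "real k * ln (real k) - real k \<le> ln (fact k)"
proof -
  have "real k ^ k / fact k \<le> exp (real k)" by (rule pow_fact_le_exp) simp
  then have "real k ^ k \<le> exp (real k) * fact k" by (simp add: divide_le_eq)
  then have "ln (real k ^ k) \<le> ln (exp (real k) * fact k)"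
    using assms by (subst ln_le_cancel_iff) auto
  then show ?thesis using assms by (simp add: ln_realpow ln_mult)
qed

lemma pow2_le_fact:
  assumes "0 < k" and h: "real n \<le> real k * (log 2 (real k) - 1 / ln 2)"
  shows "(2::nat)^n \<le> fact k"
proof -
  have "real n * ln 2 \<le> real k * (log 2 (real k) - 1 / ln 2) * ln 2"
    using h by (simp add: mult_right_mono)
  also have "\<dots> = real k * ln (real k) - real k"
    by (simp add: log_def algebra_simps)
  also have "\<dots> \<le> ln (fact k)" by (rule fact_ln_lb[OF assms(1)])
  finally have "ln (2 ^ n) \<le> ln (real (fact k))" by (simp add: ln_realpow)
  then have "(2::real) ^ n \<le> real (fact k)" by (subst (asm) ln_le_cancel_iff) auto
  then show ?thesis by (metis of_nat_fact of_nat_le_iff of_nat_numeral of_nat_power)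
qed

lemma asym:
  assumes e: "(\<epsilon>::real) > 0"
  shows "\<exists>N. \<forall>n\<ge>N. 2 \<le> n \<and> (\<exists>k\<le>n. (2::nat)^n \<le> fact k \<and>
           real k + 3 * log 2 (real n) + 5 \<le> (1+\<epsilon>) * real n / log 2 (real n))"
proof -
  define \<delta> where "\<delta> = \<epsilon> / 2"
  have d: "\<delta> > 0" using e by (simp add: \<delta>_def)
  have ev1: "eventually (\<lambda>n::nat. (log 2 (log 2 (real n)) + 1 / ln 2) / log 2 (real n) < \<delta>/(1+\<delta>)) sequentially"
    by (rule order_tendstoD(2)[OF lim1]) (use d in simp)
  have ev2: "eventually (\<lambda>n::nat. 2*(1+\<delta>) \<le> log 2 (real n)) sequentially"
    using lim2 unfolding filterlim_at_top by blast
  have ev3: "eventually (\<lambda>n::nat. (3 * log 2 (real n) + 6) * log 2 (real n) / real n < \<delta>) sequentially"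
    by (rule order_tendstoD(2)[OF lim3 d])
  have ev4: "eventually (\<lambda>n::nat. 4 \<le> n) sequentially" by (rule eventually_ge_at_top)
  obtain N where N: "\<And>n. n \<ge> N \<Longrightarrow>
      (log 2 (log 2 (real n)) + 1 / ln 2) / log 2 (real n) < \<delta>/(1+\<delta>) \<and> 2*(1+\<delta>) \<le> log 2 (real n) \<and>
      (3 * log 2 (real n) + 6) * log 2 (real n) / real n < \<delta> \<and> 4 \<le> n"
    using eventually_conj[OF ev1 eventually_conj[OF ev2 eventually_conj[OF ev3 ev4]]]
    unfolding eventually_sequentially by blast
  show ?thesis
  proof (rule exI[of _ N], intro allI impI conjI)
    fix n assume nN: "N \<le> n"
    note H = N[OF nN]
    show "2 \<le> n" using H by simp
    define L where "L = log 2 (real n)"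
    define c where "c = 1 / ln (2::real)"
    define r where "r = (log 2 L + c) / L"
    have n4: "(4::real) \<le> real n" using H by simp
    have L2: "2*(1+\<delta>) \<le> L" using H by (simp add: L_def)
    have Lpos: "L > 0" using L2 d by simp
    have r: "r < \<delta>/(1+\<delta>)" using H by (simp add: r_def L_def c_def)
    have q: "(3 * L + 6) * L / real n < \<delta>" using H by (simp add: L_def)
    define k0 where "k0 = (1+\<delta>) * real n / L"
    define k where "k = nat \<lceil>k0\<rceil>"
    have k0pos: "k0 > 0" using d Lpos n4 by (simp add: k0_def)
    have kge: "real k \<ge> k0" unfolding k_def by linarith
    have kpos: "0 < k" using kge k0pos by simp
    have kk: "real k = of_int \<lceil>k0\<rceil>" using k0pos unfolding k_def by simp
    have klt: "real k < k0 + 1" unfolding kk by linarith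
    have k0half: "k0 \<le> real n / 2"
    proof -
      have "(1+\<delta>) / L \<le> 1/2" using L2 Lpos by (simp add: divide_le_eq)
      then have "(1+\<delta>) / L * real n \<le> 1/2 * real n" by (rule mult_right_mono) simp
      then show ?thesis by (simp add: k0_def)
    qed
    show "\<exists>k\<le>n. (2::nat)^n \<le> fact k \<and> real k + 3 * log 2 (real n) + 5 \<le> (1+\<epsilon>) * real n / log 2 (real n)"
    proof (rule exI[of _ k], intro conjI)
      show "k \<le> n" using klt k0half n4 by linarith
      have "3 * L + 6 \<le> \<delta> * real n / L"
      proof -
        have "(3 * L + 6) * L < \<delta> * real n" using q n4 by (simp add: divide_less_eq)
        then show ?thesis using Lpos by (simp add: le_divide_eq)
      qed
      moreover have "(1+\<epsilon>) * real n / L = k0 + \<delta> * real n / L"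
        using Lpos by (simp add: k0_def \<delta>_def field_simps)
      ultimately show "real k + 3 * log 2 (real n) + 5 \<le> (1+\<epsilon>) * real n / log 2 (real n)"
        using klt by (simp add: L_def)
      have logk0: "log 2 k0 \<ge> L - log 2 L"
      proof -
        have "log 2 k0 = log 2 (1+\<delta>) + log 2 (real n) - log 2 L"
          unfolding k0_def using d n4 Lpos by (simp add: log_mult log_divide)
        moreover have "log 2 (1+\<delta>) \<ge> 0" using d by simp
        ultimately show ?thesis by (simp add: L_def)
      qed
      have rL: "L - log 2 L - c = L * (1 - r)" using Lpos by (simp add: r_def field_simps)
      have r1: "(1+\<delta>) * (1 - r) \<ge> 1"
      proof -
        have "r * (1+\<delta>) < \<delta>" using r d by (simp add: less_divide_eq)
        then show ?thesis by (simp add: algebra_simps)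
      qed
      have rlt1: "r < 1"
      proof -
        have "\<delta>/(1+\<delta>) < 1" using d by simp
        then show ?thesis using r by linarith
      qed
      have A0: "log 2 k0 - c \<ge> L * (1 - r)" using logk0 rL by linarith
      have A1: "L * (1 - r) > 0" using Lpos rlt1 by simp
      have "real n \<le> (1+\<delta>) * real n * (1 - r)" using r1 n4
        by (metis mult.commute mult.left_commute mult_le_cancel_left1 of_nat_0_le_iff order.trans order_refl
            linorder_not_le mult_le_cancel_right1 less_le_trans)
      also have "\<dots> = k0 * (L * (1 - r))" using Lpos by (simp add: k0_def field_simps)
      also have "\<dots> \<le> k0 * (log 2 k0 - c)" using A0 k0pos by (simp add: mult_left_mono)
      also have "\<dots> \<le> real k * (log 2 (real k) - c)"
      proof (rule mult_mono)
        show "k0 \<le> real k" by (rule kge)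
        show "log 2 k0 - c \<le> log 2 (real k) - c" using kge k0pos by simp
        show "0 \<le> real k" by simp
        show "0 \<le> log 2 k0 - c" using A0 A1 by linarith
      qed
      finally show "(2::nat)^n \<le> fact k" by (intro pow2_le_fact kpos) (simp add: c_def)
    qed
  qed
qed


lemma T_le_log: "(2::nat)^T \<le> n \<Longrightarrow> real T \<le> log 2 (real n)"
  by (metis le_log_of_power of_nat_le_iff of_nat_numeral of_nat_power one_less_numeral_iff semiring_norm(76))

theorem mainTheorem19:
  shows "\<forall>\<epsilon>::real. \<epsilon> > 0 \<longrightarrow> (\<exists>C::real. \<forall>n::nat. \<forall>A B :: bool list set.
           n \<ge> 2 \<longrightarrow> A \<subseteq> {w. length w = n} \<longrightarrow> B \<subseteq> {w. length w = n} \<longrightarrow> A \<inter> B = {} \<longrightarrow>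
           (\<exists>\<phi>. sentence \<phi> \<and> real (nquant \<phi>) \<le> (1 + \<epsilon>) * real n / log 2 (real n) + C \<and>
                 (\<forall>w\<in>A. holds w \<phi>) \<and> (\<forall>w\<in>B. \<not> holds w \<phi>)))"
proof (intro allI impI)
  fix \<epsilon> :: real assume e: "\<epsilon> > 0"
  obtain N where N: "\<And>n. n \<ge> N \<Longrightarrow> 2 \<le> n \<and> (\<exists>k\<le>n. (2::nat)^n \<le> fact k \<and>
           real k + 3 * log 2 (real n) + 5 \<le> (1+\<epsilon>) * real n / log 2 (real n))"
    using asym[OF e] by blast
  show "\<exists>C::real. \<forall>n::nat. \<forall>A B :: bool list set.
           n \<ge> 2 \<longrightarrow> A \<subseteq> {w. length w = n} \<longrightarrow> B \<subseteq> {w. length w = n} \<longrightarrow> A \<inter> B = {} \<longrightarrow>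
           (\<exists>\<phi>. sentence \<phi> \<and> real (nquant \<phi>) \<le> (1 + \<epsilon>) * real n / log 2 (real n) + C \<and>
                 (\<forall>w\<in>A. holds w \<phi>) \<and> (\<forall>w\<in>B. \<not> holds w \<phi>))"
  proof (rule exI[of _ "4 * real N + 5"], intro allI impI)
    fix n :: nat and A B :: "bool list set"
    assume n2: "2 \<le> n" and A: "A \<subseteq> {w. length w = n}" and B: "B \<subseteq> {w. length w = n}" and AB: "A \<inter> B = {}"
    have Rpos: "0 \<le> (1 + \<epsilon>) * real n / log 2 (real n)" using e n2 by simp
    show "\<exists>\<phi>. sentence \<phi> \<and> real (nquant \<phi>) \<le> (1 + \<epsilon>) * real n / log 2 (real n) + (4 * real N + 5) \<and>
                 (\<forall>w\<in>A. holds w \<phi>) \<and> (\<forall>w\<in>B. \<not> holds w \<phi>)"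
    proof (cases "n < N")
      case True
      obtain \<phi> T where p: "2^T \<le> n" "sentence \<phi>" "nquant \<phi> = n + 3*T + 5"
        "\<forall>w\<in>A. holds w \<phi>" "\<forall>w\<in>B. \<not> holds w \<phi>"
        using construct[OF n2 enc_small[OF n2] A B AB] by blast
      have "T < 2^T" by (rule less_exp)
      then have "nquant \<phi> \<le> 4 * N + 5" using p(1,3) True by linarith
      then have "real (nquant \<phi>) \<le> 4 * real N + 5" by linarith
      then show ?thesis using p Rpos by (intro exI[of _ \<phi>]) auto
    next
      case False
      then obtain k where k: "k \<le> n" "(2::nat)^n \<le> fact k"
        "real k + 3 * log 2 (real n) + 5 \<le> (1+\<epsilon>) * real n / log 2 (real n)"
        using N[of n] by auto
      obtain enc where enc: "good_enc n k enc" using enc_perm[OF k(1,2)] by blast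
      obtain \<phi> T where p: "2^T \<le> n" "sentence \<phi>" "nquant \<phi> = k + 3*T + 5"
        "\<forall>w\<in>A. holds w \<phi>" "\<forall>w\<in>B. \<not> holds w \<phi>"
        using construct[OF n2 enc A B AB] by blast
      have "real T \<le> log 2 (real n)" by (rule T_le_log[OF p(1)])
      then have "real (nquant \<phi>) \<le> (1+\<epsilon>) * real n / log 2 (real n)" using p(3) k(3) by simp
      then show ?thesis using p by (intro exI[of _ \<phi>]) auto
    qed
  qed
qed

end
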